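(* Consider any instance of the budgeted matching-market pricing problem (defined in the context) in which every buyer $i$ satisfies $b_i\ge v_i$, and run Algorithm 1 (described in the context). If buyer $i$ obtains her bundle $X_i$ at price per item $\bar p_i$, then every item that the algorithm assigns (to any buyer) at a price $p'<\bar p_i$ is not in $S_i$.
   Context: Instance: a finite set $I$ of $n$ buyers and a finite set $J$ of $m$ distinct items. Each buyer $i$ has a preference set $S_i\subseteq J$, a value $v_i>0$ for each item of $S_i$ (value $0$ for items outside $S_i$), and a budget $b_i\ge 0$. An outcome $\langle\mathbf{X},\mathbf{p}\rangle$ consists of pairwise disjoint bundles $X_i\subseteq J$ and payments $p_i\ge 0$. Algorithm 1 (ascending price auction). Throughout, $b_i$ denotes buyer $i$'s remaining budget (initially her budget, decreased by each payment), $J$ denotes the set of currently unsold items, and $\epsilon>0$ is an arbitrarily small price increment. For a price $p>0$, the demand of buyer $i$ is $D_i(p)=\min\{\lfloor b_i/p\rfloor,|S_i|\}$ if $p\le v_i$ and $D_i(p)=0$ if $p>v_i$. Let $A^p=\{i: v_i>p, D_i(p)>0\}$, $Q^p=\{i: v_i=p, D_i(p)>0\}$, $I^p=A^p\cup Q^p$. $G^p$ is the bipartite graph on $I^p\cup J$ with an edge $(i,j)$ iff $j\in S_i$, and $\bar G^p$ is its subgraph on $A^p\cup J$. A $B$-matching of $G^p$ (or $\bar G^p$) is a set of its edges in which every buyer $i$ lies in at most $D_i(p)$ edges and every item in at most one edge; $\mathcal{M}(G^p)$ denotes a maximum one. Given a $B$-matching $\mathcal{M}$, an augmenting path from buyer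 $i$ to item $j$ is a sequence $i=y_1,z_1,y_2,z_2,\dots,y_h,z_h=j$ of buyers $y_k$ and items $z_k$ with $z_k\in S_{y_k}$, $(y_k,z_k)\notin\mathcal{M}$ for all $k$, and $(z_k,y_{k+1})\in\mathcal{M}$ for $k<h$. "Giving item $j$ to buyer $i$ at price $q$" means: remove $j$ from $J$, add $j$ to $X_i$, increase $p_i$ by $q$ and decrease $b_i$ by $q$. Start with $p=0$, $X_i=\emptyset$, $p_i=0$. While a maximum $B$-matching of $G^p$ is nonempty: increase $p$ until $|\mathcal{M}(G^p)|>|\mathcal{M}(G^{p+\epsilon})|$ (a critical price). If $|\mathcal{M}(G^p)|>|\mathcal{M}(\bar G^p)|$, run Procedure I: let $J_Q=\bigcup_{i\in Q^p}S_i$; compute a maximum $B$-matching $\mathcal{M}$ of $\bar G^p$ that matches the minimum number of items of $J_Q$; let $\bar J$ be the items of $J$ unmatched in $\mathcal{M}$ and $N(\bar J)$ the buyers having an augmenting path w.r.t. $\mathcal{M}$ to some item of $\bar J$; give each item $j$ with $(i,j)\in\mathcal{M}$, $i\in N(\bar J)$, to $i$ at price $p$; and assign the items of $\bar J$ to buyers in $Q^p$ (respecting supply and budget constraints), each at price $p$. Otherwise run Procedure II: compute a maximum $B$-matching $\mathcal{M}$ of $G^{p+\epsilon}$; let $\bar J$ be the items unmatched in it and $N(\bar J)$ the buyers having an augmenting path to an item of $\bar J$; give each item $j$ with $(i,j)\in\mathcal{M}$, $i\in N(\bar J)$, to $i$ at price $p+\epsilon$; remove $\bar J$ from $J$; and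 remove all items no longer demanded by any buyer. *)

theory Defs
  imports Complex_Main "HOL-Library.Product_Lexorder"
begin

text \<open>Prices, budgets and payments live in the ordered group of quantities x + k*eps with
  x real, k an integer and eps a positive infinitesimal ("arbitrarily small" increment).
  The pair (x, k) stands for x + k*eps; the order is the lexicographic one from
  Product_Lexorder, which is exactly the order of x + k*eps for infinitesimal eps > 0.\<close>

type_synonym xreal = "real \<times> int"

definition xscale :: "nat \<Rightarrow> xreal \<Rightarrow> xreal" where
  "xscale n q = (real n * fst q, int n * snd q)"

definition xsub :: "xreal \<Rightarrow> xreal \<Rightarrow> xreal" where
  "xsub a c = (fst a - fst c, snd a - snd c)"

text \<open>Demand D_i(q) = min(floor(b_i/q), |S_i|) if q \<le> v_i and 0 if q > v_i, where b_i is the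
  remaining budget; floor(b_i/q) is written out as the largest n with n*q \<le> b_i.\<close>
definition demand :: "('b \<Rightarrow> 'j set) \<Rightarrow> ('b \<Rightarrow> real) \<Rightarrow> ('b \<Rightarrow> xreal) \<Rightarrow> 'b \<Rightarrow> xreal \<Rightarrow> nat" where
  "demand S v bud i q =
     (if (v i, 0) < q then 0
      else Max {n. n \<le> card (S i) \<and> (n = 0 \<or> xscale n q \<le> bud i)})"

definition active :: "'b set \<Rightarrow> ('b \<Rightarrow> 'j set) \<Rightarrow> ('b \<Rightarrow> real) \<Rightarrow> ('b \<Rightarrow> xreal) \<Rightarrow> xreal \<Rightarrow> 'b set" where
  "active I S v bud q = {i \<in> I. demand S v bud i q > 0}"

definition edges :: "('b \<Rightarrow> 'j set) \<Rightarrow> 'b set \<Rightarrow> 'j set \<Rightarrow> ('b \<times> 'j) set" where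
  "edges S Bs J = {(i, j). i \<in> Bs \<and> j \<in> J \<and> j \<in> S i}"

definition is_bmatching :: "('b \<Rightarrow> 'j set) \<Rightarrow> 'b set \<Rightarrow> ('b \<Rightarrow> nat) \<Rightarrow> 'j set \<Rightarrow> ('b \<times> 'j) set \<Rightarrow> bool" where
  "is_bmatching S Bs cap J M \<longleftrightarrow>
     M \<subseteq> edges S Bs J \<and> (\<forall>i. card {j. (i, j) \<in> M} \<le> cap i) \<and> (\<forall>j. card {i. (i, j) \<in> M} \<le> 1)"

definition is_max_bmatching :: "('b \<Rightarrow> 'j set) \<Rightarrow> 'b set \<Rightarrow> ('b \<Rightarrow> nat) \<Rightarrow> 'j set \<Rightarrow> ('b \<times> 'j) set \<Rightarrow> bool" where
  "is_max_bmatching S Bs cap J M \<longleftrightarrow>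
     is_bmatching S Bs cap J M \<and> (\<forall>M'. is_bmatching S Bs cap J M' \<longrightarrow> card M' \<le> card M)"

definition msize :: "('b \<Rightarrow> 'j set) \<Rightarrow> 'b set \<Rightarrow> ('b \<Rightarrow> nat) \<Rightarrow> 'j set \<Rightarrow> nat" where
  "msize S Bs cap J = Max (card ` {M. is_bmatching S Bs cap J M})"

definition aug_path :: "('b \<Rightarrow> 'j set) \<Rightarrow> 'b set \<Rightarrow> 'j set \<Rightarrow> ('b \<times> 'j) set \<Rightarrow> 'b \<Rightarrow> 'j \<Rightarrow> bool" where
  "aug_path S Bs J M i j \<longleftrightarrow>
     (\<exists>ys zs. ys \<noteq> [] \<and> length zs = length ys \<and> hd ys = i \<and> last zs = j \<and>
        (\<forall>k < length ys. ys ! k \<in> Bs \<and> zs ! k \<in> J \<and> zs ! k \<in> S (ys ! k) \<and> (ys ! k, zs ! k) \<notin> M) \<and>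
        (\<forall>k. Suc k < length ys \<longrightarrow> (ys ! Suc k, zs ! k) \<in> M))"

record ('b, 'j) astate =
  price :: xreal
  unsold :: "'j set"
  budget :: "'b \<Rightarrow> xreal"
  sales :: "('b \<times> 'j \<times> xreal) set"   \<comment> \<open>(buyer, item, price paid for the item)\<close>

definition init_state :: "'j set \<Rightarrow> ('b \<Rightarrow> real) \<Rightarrow> ('b, 'j) astate" where
  "init_state J0 b = \<lparr>price = (0, 0), unsold = J0, budget = (\<lambda>i. (b i, 0)), sales = {}\<rparr>"

definition capa :: "('b \<Rightarrow> 'j set) \<Rightarrow> ('b \<Rightarrow> real) \<Rightarrow> ('b, 'j) astate \<Rightarrow> xreal \<Rightarrow> 'b \<Rightarrow> nat" where
  "capa S v st q = (\<lambda>i. demand S v (budget st) i q)"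

text \<open>A (real) price p reachable by increasing the current price at which
  |M(G^p)| > |M(G^(p+eps))|.\<close>
definition is_critical :: "'b set \<Rightarrow> ('b \<Rightarrow> 'j set) \<Rightarrow> ('b \<Rightarrow> real) \<Rightarrow> ('b, 'j) astate \<Rightarrow> real \<Rightarrow> bool" where
  "is_critical I S v st p \<longleftrightarrow> price st \<le> (p, 0) \<and> p > 0 \<and>
     msize S (active I S v (budget st) (p, 1)) (capa S v st (p, 1)) (unsold st)
       < msize S (active I S v (budget st) (p, 0)) (capa S v st (p, 0)) (unsold st)"

definition next_critical :: "'b set \<Rightarrow> ('b \<Rightarrow> 'j set) \<Rightarrow> ('b \<Rightarrow> real) \<Rightarrow> ('b, 'j) astate \<Rightarrow> real \<Rightarrow> bool" where
  "next_critical I S v st p \<longleftrightarrow> is_critical I S v st p \<and> (\<forall>p'. is_critical I S v st p' \<longrightarrow> p \<le> p')"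

text \<open>One iteration of the while loop of Algorithm 1 (Procedure I or Procedure II).\<close>
inductive alg_step :: "'b set \<Rightarrow> ('b \<Rightarrow> 'j set) \<Rightarrow> ('b \<Rightarrow> real) \<Rightarrow> ('b, 'j) astate \<Rightarrow> ('b, 'j) astate \<Rightarrow> bool"
  for I S v where
  proc1:
  "\<lbrakk> next_critical I S v st p; q = (p, 0);
     Ip = active I S v (budget st) q;
     A = {i \<in> Ip. v i > p}; Q = {i \<in> Ip. v i = p};
     msize S A (capa S v st q) (unsold st) < msize S Ip (capa S v st q) (unsold st);
     JQ = \<Union> (S ` Q);
     is_max_bmatching S A (capa S v st q) (unsold st) M;
     \<forall>M'. is_max_bmatching S A (capa S v st q) (unsold st) M' \<longrightarrow>
          card (snd ` M \<inter> JQ) \<le> card (snd ` M' \<inter> JQ);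
     Jbar = unsold st - snd ` M;
     N = {i \<in> A. \<exists>j \<in> Jbar. aug_path S A (unsold st) M i j};
     M1 = {(i, j) \<in> M. i \<in> N};
     bud1 = (\<lambda>i. xsub (budget st i) (xscale (card {j. (i, j) \<in> M1}) q));
     is_max_bmatching S Q (\<lambda>i. demand S v bud1 i q) Jbar MQ;
     st' = \<lparr>price = q, unsold = unsold st - snd ` M1 - snd ` MQ,
            budget = (\<lambda>i. xsub (bud1 i) (xscale (card {j. (i, j) \<in> MQ}) q)),
            sales = sales st \<union> {(i, j, q) | i j. (i, j) \<in> M1 \<union> MQ}\<rparr> \<rbrakk>
   \<Longrightarrow> alg_step I S v st st'"
| proc2:
  "\<lbrakk> next_critical I S v st p; q0 = (p, 0); q = (p, 1);
     Ip0 = active I S v (budget st) q0;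
     \<not> msize S {i \<in> Ip0. v i > p} (capa S v st q0) (unsold st) < msize S Ip0 (capa S v st q0) (unsold st);
     Ip = active I S v (budget st) q;
     is_max_bmatching S Ip (capa S v st q) (unsold st) M;
     Jbar = unsold st - snd ` M;
     N = {i \<in> Ip. \<exists>j \<in> Jbar. aug_path S Ip (unsold st) M i j};
     M1 = {(i, j) \<in> M. i \<in> N};
     bud1 = (\<lambda>i. xsub (budget st i) (xscale (card {j. (i, j) \<in> M1}) q));
     J1 = unsold st - snd ` M1 - Jbar;
     st' = \<lparr>price = q, unsold = {j \<in> J1. \<exists>i \<in> I. j \<in> S i \<and> demand S v bud1 i q > 0},
            budget = bud1,
            sales = sales st \<union> {(i, j, q) | i j. (i, j) \<in> M1}\<rparr> \<rbrakk>
   \<Longrightarrow> alg_step I S v st st'"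

definition final_run :: "'b set \<Rightarrow> 'j set \<Rightarrow> ('b \<Rightarrow> 'j set) \<Rightarrow> ('b \<Rightarrow> real) \<Rightarrow> ('b \<Rightarrow> real) \<Rightarrow> ('b, 'j) astate \<Rightarrow> bool" where
  "final_run I J0 S v b st \<longleftrightarrow>
     (alg_step I S v)\<^sup>*\<^sup>* (init_state J0 b) st \<and> \<not> (\<exists>p. is_critical I S v st p)"

end

theory Submission imports Defs begin
lemma bm_finite:
  assumes "is_bmatching S Bs cap J M" "finite Bs" "finite J"
  shows "finite M"
proof -
  have "M \<subseteq> Bs \<times> J" using assms(1) by (auto simp: is_bmatching_def edges_def)
  then show ?thesis using assms(2,3) finite_subset by blast
qed

lemma aug_ind:
  "\<And>ys zs M x. is_bmatching S Bs cap J M \<Longrightarrow> finite Bs \<Longrightarrow> finite J \<Longrightarrow> length ys = n \<Longrightarrow> n > 0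
   \<Longrightarrow> length zs = n \<Longrightarrow> ys ! 0 = x \<Longrightarrow>
   (\<forall>k<n. ys!k \<in> Bs \<and> zs!k \<in> J \<and> zs!k \<in> S (ys!k) \<and> (ys!k, zs!k) \<notin> M) \<Longrightarrow>
   (\<forall>k. Suc k < n \<longrightarrow> (ys!Suc k, zs!k) \<in> M) \<Longrightarrow> zs ! (n - 1) \<notin> snd ` M \<Longrightarrow>
   card {j. (x,j)\<in>M} < cap x \<Longrightarrow> \<exists>M'. is_bmatching S Bs cap J M' \<and> card M < card M'"
proof (induction n rule: less_induct)
  case (less n ys zs M x)
  note bm = less.prems(1)
  have finM: "finite M" using bm_finite less.prems(1-3) .
  have fin1: "finite {j. (w,j)\<in>M}" for w
  proof -
    have "{j. (w,j)\<in>M} \<subseteq> snd ` M" by (auto intro: rev_image_eqI)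
    then show ?thesis using finM finite_subset by blast
  qed
  have fin2: "finite {w. (w,j)\<in>M}" for j
  proof -
    have "{w. (w,j)\<in>M} \<subseteq> fst ` M" by (auto intro: rev_image_eqI)
    then show ?thesis using finM finite_subset by blast
  qed
  have P0: "x \<in> Bs" "zs!0 \<in> J" "zs!0 \<in> S x" "(x, zs!0) \<notin> M"
    using less.prems(5,7,8) by auto
  show ?case
  proof (cases "n = 1")
    case True
    define M' where "M' = insert (x, zs!0) M"
    have un: "zs!0 \<notin> snd ` M" using less.prems(10) True by simp
    have "is_bmatching S Bs cap J M'"
      unfolding is_bmatching_def
    proof (intro conjI allI)
      show "M' \<subseteq> edges S Bs J" using bm P0 by (auto simp: M'_def is_bmatching_def edges_def)
    next
      fix w
      show "card {j. (w, j) \<in> M'} \<le> cap w"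
      proof (cases "w = x")
        case True
        have "{j. (w, j) \<in> M'} = insert (zs!0) {j. (x,j)\<in>M}" using True by (auto simp: M'_def)
        then have "card {j. (w, j) \<in> M'} \<le> Suc (card {j. (x,j)\<in>M})"
          using fin1 by (simp add: card_insert_if)
        then show ?thesis using less.prems(11) True by simp
      next
        case False
        then have "{j. (w, j) \<in> M'} = {j. (w,j)\<in>M}" by (auto simp: M'_def)
        then show ?thesis using bm by (simp add: is_bmatching_def)
      qed
    next
      fix j
      show "card {w. (w, j) \<in> M'} \<le> 1"
      proof (cases "j = zs!0")
        case True
        have "{w. (w, j) \<in> M'} = {x}" using True un by (force simp: M'_def)
        then show ?thesis by simp
      next
        case False
        then have "{w. (w, j) \<in> M'} = {w. (w,j)\<in>M}" by (auto simp: M'_def)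
        then show ?thesis using bm by (simp add: is_bmatching_def)
      qed
    qed
    moreover have "card M' = Suc (card M)" using P0 finM by (simp add: M'_def)
    ultimately show ?thesis by auto
  next
    case False
    with less.prems(5) have n2: "n \<ge> 2" by simp
    show ?thesis
    proof (cases "\<exists>k. 1 \<le> k \<and> k < n \<and> zs!k = zs!0")
      case True
      then obtain k where k: "1 \<le> k" "k < n" "zs!k = zs!0" by blast
      define ys' where "ys' = x # drop (k+1) ys"
      define zs' where "zs' = drop k zs"
      have l1: "length ys' = n - k" "length zs' = n - k"
        using k less.prems(4,6) by (auto simp: ys'_def zs'_def)
      have y'n: "ys' ! m = (if m = 0 then x else ys ! (k + m))" if "m < n - k" for m
        using that k less.prems(4) by (cases m) (auto simp: ys'_def)
      have z'n: "zs' ! m = zs ! (k + m)" if "m < n - k" for m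
        using that k less.prems(6) by (auto simp: zs'_def)
      show ?thesis
      proof (rule less.IH[of "n - k" M ys' zs' x])
        show "n - k < n" "is_bmatching S Bs cap J M" "finite Bs" "finite J" "length ys' = n - k"
          "0 < n - k" "length zs' = n - k" "ys' ! 0 = x" "card {j. (x, j) \<in> M} < cap x"
          using k l1 less.prems by (auto simp: ys'_def)
        show "\<forall>m<n - k. ys' ! m \<in> Bs \<and> zs' ! m \<in> J \<and> zs' ! m \<in> S (ys' ! m) \<and> (ys' ! m, zs' ! m) \<notin> M"
        proof (intro allI impI)
          fix m assume m: "m < n - k"
          show "ys' ! m \<in> Bs \<and> zs' ! m \<in> J \<and> zs' ! m \<in> S (ys' ! m) \<and> (ys' ! m, zs' ! m) \<notin> M"
          proof (cases "m = 0")
            case True then show ?thesis using y'n z'n m k P0 by simp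
          next
            case False
            then have "k + m < n" using m by simp
            then show ?thesis using y'n z'n m False less.prems(8) by simp
          qed
        qed
        show "\<forall>m. Suc m < n - k \<longrightarrow> (ys' ! Suc m, zs' ! m) \<in> M"
        proof (intro allI impI)
          fix m assume m: "Suc m < n - k"
          have "Suc (k + m) < n" using m by simp
          then have "(ys ! Suc (k+m), zs ! (k+m)) \<in> M" using less.prems(9) by blast
          then show "(ys' ! Suc m, zs' ! m) \<in> M" using y'n[of "Suc m"] z'n[of m] m by simp
        qed
        show "zs' ! (n - k - 1) \<notin> snd ` M"
          using z'n[of "n - k - 1"] k less.prems(10) by simp
      qed
    next
      case False
      hence nd: "\<And>k. 1 \<le> k \<Longrightarrow> k < n \<Longrightarrow> zs!k \<noteq> zs!0" by blast
      define y2 where "y2 = ys ! 1"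
      define z1 where "z1 = zs ! 0"
      have yz: "(y2, z1) \<in> M" using less.prems(9) n2 by (auto simp: y2_def z1_def)
      have xy: "x \<noteq> y2" using yz P0 by (auto simp: z1_def)
      define M0 where "M0 = insert (x, z1) (M - {(y2, z1)})"
      have finM0: "finite M0" using finM by (simp add: M0_def)
      have cM0: "card M0 = card M"
      proof -
        have "card M > 0" using finM yz card_gt_0_iff by blast
        then show ?thesis using finM yz P0 xy by (simp add: M0_def z1_def card_insert_if)
      qed
      have bm0: "is_bmatching S Bs cap J M0"
        unfolding is_bmatching_def
      proof (intro conjI allI)
        have "(x, z1) \<in> edges S Bs J" using P0 by (simp add: edges_def z1_def)
        moreover have "M \<subseteq> edges S Bs J" using bm by (simp add: is_bmatching_def)
        ultimately show "M0 \<subseteq> edges S Bs J" unfolding M0_def by blast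
      next
        fix w
        show "card {j. (w, j) \<in> M0} \<le> cap w"
        proof (cases "w = x")
          case True
          have "{j. (w, j) \<in> M0} \<subseteq> insert z1 {j. (x,j)\<in>M}" using True unfolding M0_def by blast
          then have "card {j. (w, j) \<in> M0} \<le> card (insert z1 {j. (x,j)\<in>M})"
            by (intro card_mono) (simp_all add: fin1)
          also have "\<dots> \<le> Suc (card {j. (x,j)\<in>M})" using fin1 by (simp add: card_insert_if)
          finally have "card {j. (w, j) \<in> M0} \<le> Suc (card {j. (x,j)\<in>M})" .
          then show ?thesis using less.prems(11) True by simp
        next
          case False
          then have "{j. (w, j) \<in> M0} \<subseteq> {j. (w,j)\<in>M}" unfolding M0_def by blast
          then have "card {j. (w, j) \<in> M0} \<le> card {j. (w,j)\<in>M}" by (intro card_mono) (simp_all add: fin1)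
          moreover have "card {j. (w, j) \<in> M} \<le> cap w" using bm by (simp add: is_bmatching_def)
          ultimately show ?thesis by linarith
        qed
      next
        fix j
        show "card {w. (w, j) \<in> M0} \<le> 1"
        proof (cases "j = z1")
          case True
          have "{w. (w, j) \<in> M0} \<subseteq> {x}"
          proof
            fix w assume "w \<in> {w. (w, j) \<in> M0}"
            then have "(w, z1) \<in> M0" using True by simp
            show "w \<in> {x}"
            proof (rule ccontr)
              assume "w \<notin> {x}"
              then have "(w, z1) \<in> M" "w \<noteq> y2" using \<open>(w, z1) \<in> M0\<close> unfolding M0_def by blast+
              have "{w, y2} \<subseteq> {w. (w, z1) \<in> M}" using yz \<open>(w, z1) \<in> M\<close> by blast
              then have "card {w, y2} \<le> card {w. (w, z1) \<in> M}" by (intro card_mono) (simp_all add: fin2)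
              moreover have "card {w, y2} = 2" using \<open>w \<noteq> y2\<close> by simp
              moreover have "card {w. (w, z1) \<in> M} \<le> 1" using bm by (simp add: is_bmatching_def)
              ultimately show False by linarith
            qed
          qed
          then have "card {w. (w, j) \<in> M0} \<le> card {x}" by (intro card_mono) simp_all
          then show ?thesis by simp
        next
          case False
          then have "{w. (w, j) \<in> M0} \<subseteq> {w. (w,j)\<in>M}" unfolding M0_def by blast
          then have "card {w. (w, j) \<in> M0} \<le> card {w. (w,j)\<in>M}" by (intro card_mono) (simp_all add: fin2)
          moreover have "card {w. (w, j) \<in> M} \<le> 1" using bm by (simp add: is_bmatching_def)
          ultimately show ?thesis by linarith
        qed
      qed
      have sp: "card {j. (y2, j) \<in> M0} < cap y2"
      proof -
        have e: "{j. (y2, j) \<in> M0} = {j. (y2, j) \<in> M} - {z1}" using xy by (auto simp: M0_def)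
        have "card {j. (y2, j) \<in> M0} = card {j. (y2, j) \<in> M} - 1"
          unfolding e using yz fin1 by simp
        moreover have "card {j. (y2, j) \<in> M} > 0" using yz fin1 card_gt_0_iff by blast
        moreover have "card {j. (y2, j) \<in> M} \<le> cap y2" using bm by (simp add: is_bmatching_def)
        ultimately show ?thesis by linarith
      qed
      obtain M' where M': "is_bmatching S Bs cap J M'" "card M0 < card M'"
      proof -
        have "\<exists>M'. is_bmatching S Bs cap J M' \<and> card M0 < card M'"
        proof (rule less.IH[of "n - 1" M0 "tl ys" "tl zs" y2])
          show "n - 1 < n" "is_bmatching S Bs cap J M0" "finite Bs" "finite J" "length (tl ys) = n - 1"
            "0 < n - 1" "length (tl zs) = n - 1" "tl ys ! 0 = y2" "card {j. (y2, j) \<in> M0} < cap y2"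
            using n2 less.prems bm0 sp by (auto simp: y2_def nth_tl)
          show "\<forall>m<n - 1. tl ys ! m \<in> Bs \<and> tl zs ! m \<in> J \<and> tl zs ! m \<in> S (tl ys ! m) \<and> (tl ys ! m, tl zs ! m) \<notin> M0"
          proof (intro allI impI)
            fix m assume m: "m < n - 1"
            have ne: "zs ! Suc m \<noteq> z1" using nd[of "Suc m"] m by (simp add: z1_def)
            show "tl ys ! m \<in> Bs \<and> tl zs ! m \<in> J \<and> tl zs ! m \<in> S (tl ys ! m) \<and> (tl ys ! m, tl zs ! m) \<notin> M0"
              using less.prems(4,6,8) m ne by (auto simp: nth_tl M0_def)
          qed
          show "\<forall>m. Suc m < n - 1 \<longrightarrow> (tl ys ! Suc m, tl zs ! m) \<in> M0"
          proof (intro allI impI)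
            fix m assume m: "Suc m < n - 1"
            have ne: "zs ! Suc m \<noteq> z1" using nd[of "Suc m"] m by (simp add: z1_def)
            show "(tl ys ! Suc m, tl zs ! m) \<in> M0"
              using less.prems(4,6,9) m ne by (auto simp: nth_tl M0_def)
          qed
          show "tl zs ! (n - 1 - 1) \<notin> snd ` M0"
          proof -
            have e: "tl zs ! (n - 1 - 1) = zs ! (n - 1)" using n2 less.prems(6) by (simp add: nth_tl Suc_diff_Suc)
            have "zs ! (n - 1) \<noteq> z1" using nd[of "n - 1"] n2 by (simp add: z1_def)
            then show ?thesis unfolding e using less.prems(10) by (auto simp: M0_def)
          qed
        qed
        then show ?thesis using that by blast
      qed
      then show ?thesis using cM0 by auto
    qed
  qed
qed


lemma aug_max_contra:
  assumes "is_max_bmatching S Bs cap J M" "finite Bs" "finite J"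
    "aug_path S Bs J M x jb" "jb \<notin> snd ` M" "card {j. (x,j)\<in>M} < cap x"
  shows False
proof -
  obtain ys zs where p: "ys \<noteq> []" "length zs = length ys" "hd ys = x" "last zs = jb"
    "\<forall>k < length ys. ys ! k \<in> Bs \<and> zs ! k \<in> J \<and> zs ! k \<in> S (ys ! k) \<and> (ys ! k, zs ! k) \<notin> M"
    "\<forall>k. Suc k < length ys \<longrightarrow> (ys ! Suc k, zs ! k) \<in> M"
    using assms(4) unfolding aug_path_def by blast
  have bm: "is_bmatching S Bs cap J M" and mx: "\<And>M'. is_bmatching S Bs cap J M' \<Longrightarrow> card M' \<le> card M"
    using assms(1) by (auto simp: is_max_bmatching_def)
  have "ys ! 0 = x" using p(1,3) by (simp add: hd_conv_nth)
  moreover have "zs ! (length ys - 1) = jb" using p(1,2,4) by (metis last_conv_nth length_0_conv)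
  ultimately obtain M' where "is_bmatching S Bs cap J M'" "card M < card M'"
    using aug_ind[OF bm assms(2,3) refl _ p(2) _ p(5,6) _ assms(6)] p(1) assms(5) by auto
  then show False using mx by fastforce
qed

lemma aug_extend:
  assumes "aug_path S Bs J M i' jb" "(i',j') \<in> M" "i \<in> Bs" "j' \<in> J" "j' \<in> S i" "(i,j') \<notin> M"
  shows "aug_path S Bs J M i jb"
proof -
  obtain ys zs where p: "ys \<noteq> []" "length zs = length ys" "hd ys = i'" "last zs = jb"
    "\<forall>k < length ys. ys ! k \<in> Bs \<and> zs ! k \<in> J \<and> zs ! k \<in> S (ys ! k) \<and> (ys ! k, zs ! k) \<notin> M"
    "\<forall>k. Suc k < length ys \<longrightarrow> (ys ! Suc k, zs ! k) \<in> M"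
    using assms(1) unfolding aug_path_def by blast
  have zne: "zs \<noteq> []" using p(1,2) by auto
  show ?thesis unfolding aug_path_def
  proof (intro exI conjI)
    show "i # ys \<noteq> []" "length (j' # zs) = length (i # ys)" "hd (i # ys) = i" "last (j' # zs) = jb"
      using p zne by auto
    show "\<forall>k<length (i # ys). (i # ys) ! k \<in> Bs \<and> (j' # zs) ! k \<in> J \<and> (j' # zs) ! k \<in> S ((i # ys) ! k) \<and> ((i # ys) ! k, (j' # zs) ! k) \<notin> M"
    proof (intro allI impI)
      fix k assume k: "k < length (i # ys)"
      show "(i # ys) ! k \<in> Bs \<and> (j' # zs) ! k \<in> J \<and> (j' # zs) ! k \<in> S ((i # ys) ! k) \<and> ((i # ys) ! k, (j' # zs) ! k) \<notin> M"
        using k p(5) assms(3-6) by (cases k) auto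
    qed
    show "\<forall>k. Suc k < length (i # ys) \<longrightarrow> ((i # ys) ! Suc k, (j' # zs) ! k) \<in> M"
    proof (intro allI impI)
      fix k assume k: "Suc k < length (i # ys)"
      show "((i # ys) ! Suc k, (j' # zs) ! k) \<in> M"
      proof (cases k)
        case 0 then show ?thesis using p(1,3) assms(2) by (simp add: hd_conv_nth)
      next
        case (Suc k') then show ?thesis using k p(6) by simp
      qed
    qed
  qed
qed

lemma aug_triv:
  assumes "i \<in> Bs" "j \<in> J" "j \<in> S i" "(i,j) \<notin> M"
  shows "aug_path S Bs J M i j"
  unfolding aug_path_def
  by (rule exI[of _ "[i]"], rule exI[of _ "[j]"]) (use assms in auto)

lemma gets:
  assumes mx: "is_max_bmatching S Bs cap J M" and fin: "finite Bs" "finite J"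
    and i: "i \<in> Bs" "cap i > 0" "j' \<in> S i"
    and H: "(\<exists>i'. (i',j') \<in> M \<and> (\<exists>jb \<in> J - snd ` M. aug_path S Bs J M i' jb)) \<or> j' \<in> J - snd ` M"
  shows "\<exists>j0. (i,j0) \<in> M \<and> (\<exists>jb \<in> J - snd ` M. aug_path S Bs J M i jb)"
proof -
  have bm: "is_bmatching S Bs cap J M" using mx by (simp add: is_max_bmatching_def)
  have finM: "finite M" using bm_finite[OF bm fin] .
  have fin1: "finite {j. (w,j)\<in>M}" for w
  proof -
    have "{j. (w,j)\<in>M} \<subseteq> snd ` M" by (auto intro: rev_image_eqI)
    then show ?thesis using finM finite_subset by blast
  qed
  have fin2: "finite {w. (w,j)\<in>M}" for j
  proof -
    have "{w. (w,j)\<in>M} \<subseteq> fst ` M" by (auto intro: rev_image_eqI)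
    then show ?thesis using finM finite_subset by blast
  qed
  have edg: "M \<subseteq> edges S Bs J" using bm by (simp add: is_bmatching_def)
  have ex: "\<exists>jb \<in> J - snd ` M. aug_path S Bs J M i jb"
  proof (cases "\<exists>i'. (i',j') \<in> M \<and> (\<exists>jb \<in> J - snd ` M. aug_path S Bs J M i' jb)")
    case True
    then obtain i' jb where ij: "(i',j') \<in> M" "jb \<in> J - snd ` M" "aug_path S Bs J M i' jb" by blast
    show ?thesis
    proof (cases "(i,j') \<in> M")
      case True
      have "i = i'"
      proof (rule ccontr)
        assume ne: "i \<noteq> i'"
        have "{i, i'} \<subseteq> {w. (w, j') \<in> M}" using True ij(1) by blast
        then have "card {i, i'} \<le> card {w. (w, j') \<in> M}" by (intro card_mono) (simp_all add: fin2)
        moreover have "card {i, i'} = 2" using ne by simp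
        moreover have "card {w. (w, j') \<in> M} \<le> 1" using bm by (simp add: is_bmatching_def)
        ultimately show False by linarith
      qed
      then show ?thesis using ij by blast
    next
      case False
      have "j' \<in> J" using ij(1) edg by (auto simp: edges_def)
      then show ?thesis using aug_extend[OF ij(3) ij(1) i(1) _ i(3) False] ij(2) by blast
    qed
  next
    case False
    then have j': "j' \<in> J" "j' \<notin> snd ` M" using H by auto
    then have "(i,j') \<notin> M" by (auto intro: rev_image_eqI)
    then show ?thesis using aug_triv[of i Bs j' J S M] i(1,3) j' by blast
  qed
  then obtain jb where jb: "jb \<in> J - snd ` M" "aug_path S Bs J M i jb" by blast
  have "\<not> card {j. (i,j)\<in>M} < cap i"
    using aug_max_contra[OF mx fin jb(2)] jb(1) by blast
  then have "card {j. (i,j)\<in>M} > 0" using i(2) by linarith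
  then obtain j0 where "(i,j0) \<in> M" using card_gt_0_iff by fastforce
  then show ?thesis using jb by blast
qed


lemma demand_pos:
  assumes "finite (S x)" "j \<in> S x" "\<not> (v x, 0) < q" "q \<le> bud x"
  shows "demand S v bud x q > 0"
proof -
  let ?K = "{n. n \<le> card (S x) \<and> (n = 0 \<or> xscale n q \<le> bud x)}"
  have fK: "finite ?K" by (rule finite_subset[of _ "{..card (S x)}"]) auto
  have "card (S x) \<ge> 1" using assms(1,2) by (metis One_nat_def Suc_leI card_gt_0_iff empty_iff)
  moreover have "xscale 1 q = q" by (simp add: xscale_def)
  ultimately have "1 \<in> ?K" using assms(4) by simp
  then have "Max ?K \<ge> 1" using fK by (rule Max_ge[rotated])
  then show ?thesis using assms(3) by (simp add: demand_def)
qed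

lemma demand_pos_le:
  assumes "demand S v bud x q > 0"
  shows "q \<le> (v x, 0)"
  using assms by (auto simp: demand_def split: if_splits)

lemma xsub0: "xsub a (xscale 0 q) = a"
  by (simp add: xsub_def xscale_def)

definition inv6 :: "('b \<Rightarrow> 'j set) \<Rightarrow> ('b \<Rightarrow> real) \<Rightarrow> ('b \<Rightarrow> real) \<Rightarrow> 'j set \<Rightarrow> 'b \<Rightarrow> ('b, 'j) astate \<Rightarrow> bool" where
  "inv6 S v b J0 i st \<longleftrightarrow> unsold st \<subseteq> J0 \<and>
     (\<forall>x j q. (x,j,q) \<in> sales st \<longrightarrow> q \<le> price st \<and> q \<le> (v x, 0)) \<and>
     ((\<forall>j q. (i,j,q) \<notin> sales st) \<longrightarrow> budget st i = (b i, 0)) \<and>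
     (\<forall>i' j' q'. (i',j',q') \<in> sales st \<and> j' \<in> S i \<and> q' < (v i, 0) \<longrightarrow> (\<exists>j q. (i,j,q) \<in> sales st \<and> q \<le> q'))"

lemma lt_le_b: "(q::xreal) < (v, 0) \<Longrightarrow> v \<le> b \<Longrightarrow> q \<le> (b, 0)"
  by (cases q) (auto simp: less_prod_def less_eq_prod_def)

lemma step_inv:
  assumes "alg_step I S v st st'" "inv6 S v b J0 i st" "finite I" "finite J0" "S i \<subseteq> J0"
    "v i \<le> b i" "i \<in> I"
  shows "inv6 S v b J0 i st'"
  using assms
proof (induction rule: alg_step.induct)
  case (proc1 st p q Ip A Q JQ M Jbar N M1 bud1 MQ st')
  have iv: "unsold st \<subseteq> J0" "\<And>x j q. (x,j,q) \<in> sales st \<Longrightarrow> q \<le> price st \<and> q \<le> (v x, 0)"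
     "(\<forall>j q. (i,j,q) \<notin> sales st) \<Longrightarrow> budget st i = (b i, 0)"
     "\<And>i' j' q'. (i',j',q') \<in> sales st \<Longrightarrow> j' \<in> S i \<Longrightarrow> q' < (v i, 0) \<Longrightarrow> (\<exists>j q. (i,j,q) \<in> sales st \<and> q \<le> q')"
    using proc1.prems(1) unfolding inv6_def by blast+
  have pst: "price st \<le> q" using proc1.hyps(1,2) by (simp add: next_critical_def is_critical_def)
  have sst': "sales st' = sales st \<union> {(x, j, q) | x j. (x, j) \<in> M1 \<union> MQ}" "price st' = q"
    "unsold st' \<subseteq> unsold st"
    "budget st' = (\<lambda>x. xsub (bud1 x) (xscale (card {j. (x, j) \<in> MQ}) q))"
    using proc1.hyps(15) by auto
  have mxM: "is_max_bmatching S A (capa S v st q) (unsold st) M" using proc1.hyps(8) .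
  have Medg: "M \<subseteq> edges S A (unsold st)" using mxM by (simp add: is_max_bmatching_def is_bmatching_def)
  have MQedg: "MQ \<subseteq> edges S Q Jbar" using proc1.hyps(14) by (simp add: is_max_bmatching_def is_bmatching_def)
  have AIp: "A \<subseteq> Ip" "Q \<subseteq> Ip" using proc1.hyps(4,5) by auto
  have ipv: "q \<le> (v x, 0)" if "x \<in> Ip" for x
    using that proc1.hyps(3) by (auto simp: active_def intro: demand_pos_le)
  have newx: "x \<in> Ip" if "(x,j) \<in> M1 \<union> MQ" for x j
    using that Medg MQedg AIp proc1.hyps(12) by (auto simp: edges_def)
  have finA: "finite A" using proc1.hyps(3,4) proc1.prems(2) by (auto simp: active_def)
  have finJ: "finite (unsold st)" using iv(1) proc1.prems(3) finite_subset by blast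
  show ?case unfolding inv6_def
  proof (intro conjI; (intro allI impI)?)
    show "unsold st' \<subseteq> J0" using sst'(3) iv(1) by blast
  next
    fix x j q' assume "(x, j, q') \<in> sales st'"
    then consider "(x, j, q') \<in> sales st" | "q' = q" "(x,j) \<in> M1 \<union> MQ" using sst'(1) by blast
    then show "q' \<le> price st' \<and> q' \<le> (v x, 0)"
    proof cases
      case 1 then show ?thesis using iv(2)[OF 1] pst sst'(2) by auto
    next
      case 2 then show ?thesis using newx ipv sst'(2) by blast
    qed
  next
    assume none: "\<forall>j q'. (i, j, q') \<notin> sales st'"
    then have n1: "{j. (i, j) \<in> M1} = {}" "{j. (i, j) \<in> MQ} = {}" using sst'(1) by blast+
    have "budget st i = (b i, 0)" using iv(3) none sst'(1) by blast
    then show "budget st' i = (b i, 0)" using n1 sst'(4) proc1.hyps(13)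
      by (simp add: xsub0 del: Collect_empty_eq)
  next
    fix i' j' q' assume a: "(i', j', q') \<in> sales st' \<and> j' \<in> S i \<and> q' < (v i, 0)"
    then consider "(i', j', q') \<in> sales st" | "q' = q" "(i',j') \<in> M1 \<union> MQ" using sst'(1) by blast
    then show "\<exists>j q. (i, j, q) \<in> sales st' \<and> q \<le> q'"
    proof cases
      case 1 then show ?thesis using iv(4)[OF 1] a sst'(1) by blast
    next
      case 2
      show ?thesis
      proof (cases "\<exists>j q2. (i,j,q2) \<in> sales st")
        case True
        then obtain j q2 where jq: "(i,j,q2) \<in> sales st" by blast
        then have "q2 \<le> q" using iv(2)[OF jq] pst by auto
        moreover have "(i,j,q2) \<in> sales st'" using jq sst'(1) by blast
        ultimately show ?thesis using 2 by blast
      next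
        case False
        then have bi: "budget st i = (b i, 0)" using iv(3) by blast
        have qv: "q < (v i, 0)" using a 2 by simp
        have cpos: "capa S v st q i > 0" unfolding capa_def
          using demand_pos[of S i j' v q "budget st"] a finite_subset[OF proc1.prems(4,3)] qv bi
            lt_le_b[OF qv proc1.prems(5)] by auto
        have iIp: "i \<in> Ip" using cpos proc1.hyps(3) proc1.prems(6) by (simp add: active_def capa_def)
        have "p < v i" using qv proc1.hyps(2) by (simp add: less_prod_def)
        then have iA: "i \<in> A" using iIp proc1.hyps(4) by simp
        have H: "(\<exists>i'. (i',j') \<in> M \<and> (\<exists>jb \<in> unsold st - snd ` M. aug_path S A (unsold st) M i' jb))
                 \<or> j' \<in> unsold st - snd ` M"
        proof (cases "(i',j') \<in> M1")
          case True
          then show ?thesis using proc1.hyps(10,11,12) by blast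
        next
          case False
          then have "(i',j') \<in> MQ" using 2 by blast
          then have "j' \<in> Jbar" using MQedg by (auto simp: edges_def)
          then show ?thesis using proc1.hyps(10) by blast
        qed
        obtain j0 where j0: "(i,j0) \<in> M" "\<exists>jb \<in> unsold st - snd ` M. aug_path S A (unsold st) M i jb"
          using gets[OF mxM finA finJ iA cpos] a H by blast
        then have "(i,j0) \<in> M1" using proc1.hyps(10,11,12) iA by blast
        then have "(i,j0,q) \<in> sales st'" using sst'(1) by blast
        then show ?thesis using 2 by blast
      qed
    qed
  qed
next
  case (proc2 st p q0 q Ip0 Ip M Jbar N M1 bud1 J1 st')
  have iv: "unsold st \<subseteq> J0" "\<And>x j q. (x,j,q) \<in> sales st \<Longrightarrow> q \<le> price st \<and> q \<le> (v x, 0)"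
     "(\<forall>j q. (i,j,q) \<notin> sales st) \<Longrightarrow> budget st i = (b i, 0)"
     "\<And>i' j' q'. (i',j',q') \<in> sales st \<Longrightarrow> j' \<in> S i \<Longrightarrow> q' < (v i, 0) \<Longrightarrow> (\<exists>j q. (i,j,q) \<in> sales st \<and> q \<le> q')"
    using proc2.prems(1) unfolding inv6_def by blast+
  have pst: "price st \<le> q" using proc2.hyps(1,3)
    by (auto simp: next_critical_def is_critical_def less_eq_prod_def)
  have sst': "sales st' = sales st \<union> {(x, j, q) | x j. (x, j) \<in> M1}" "price st' = q"
    "unsold st' \<subseteq> unsold st"
    "budget st' = bud1"
    using proc2.hyps(12,13) by auto
  have mxM: "is_max_bmatching S Ip (capa S v st q) (unsold st) M" using proc2.hyps(7) .
  have Medg: "M \<subseteq> edges S Ip (unsold st)" using mxM by (simp add: is_max_bmatching_def is_bmatching_def)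
  have ipv: "q \<le> (v x, 0)" if "x \<in> Ip" for x
    using that proc2.hyps(6) by (auto simp: active_def intro: demand_pos_le)
  have newx: "x \<in> Ip" if "(x,j) \<in> M1" for x j
    using that Medg proc2.hyps(10) by (auto simp: edges_def)
  have finA: "finite Ip" using proc2.hyps(6) proc2.prems(2) by (auto simp: active_def)
  have finJ: "finite (unsold st)" using iv(1) proc2.prems(3) finite_subset by blast
  show ?case unfolding inv6_def
  proof (intro conjI; (intro allI impI)?)
    show "unsold st' \<subseteq> J0" using sst'(3) iv(1) by blast
  next
    fix x j q' assume "(x, j, q') \<in> sales st'"
    then consider "(x, j, q') \<in> sales st" | "q' = q" "(x,j) \<in> M1" using sst'(1) by blast
    then show "q' \<le> price st' \<and> q' \<le> (v x, 0)"
    proof cases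
      case 1 then show ?thesis using iv(2)[OF 1] pst sst'(2) by auto
    next
      case 2 then show ?thesis using newx ipv sst'(2) by blast
    qed
  next
    assume none: "\<forall>j q'. (i, j, q') \<notin> sales st'"
    then have n1: "{j. (i, j) \<in> M1} = {}" using sst'(1) by blast+
    have "budget st i = (b i, 0)" using iv(3) none sst'(1) by blast
    then show "budget st' i = (b i, 0)" using n1 sst'(4) proc2.hyps(11)
      by (simp add: xsub0 del: Collect_empty_eq)
  next
    fix i' j' q' assume a: "(i', j', q') \<in> sales st' \<and> j' \<in> S i \<and> q' < (v i, 0)"
    then consider "(i', j', q') \<in> sales st" | "q' = q" "(i',j') \<in> M1" using sst'(1) by blast
    then show "\<exists>j q. (i, j, q) \<in> sales st' \<and> q \<le> q'"
    proof cases
      case 1 then show ?thesis using iv(4)[OF 1] a sst'(1) by blast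
    next
      case 2
      show ?thesis
      proof (cases "\<exists>j q2. (i,j,q2) \<in> sales st")
        case True
        then obtain j q2 where jq: "(i,j,q2) \<in> sales st" by blast
        then have "q2 \<le> q" using iv(2)[OF jq] pst by auto
        moreover have "(i,j,q2) \<in> sales st'" using jq sst'(1) by blast
        ultimately show ?thesis using 2 by blast
      next
        case False
        then have bi: "budget st i = (b i, 0)" using iv(3) by blast
        have qv: "q < (v i, 0)" using a 2 by simp
        have cpos: "capa S v st q i > 0" unfolding capa_def
          using demand_pos[of S i j' v q "budget st"] a finite_subset[OF proc2.prems(4,3)] qv bi
            lt_le_b[OF qv proc2.prems(5)] by auto
        have iIp: "i \<in> Ip" using cpos proc2.hyps(6) proc2.prems(6) by (simp add: active_def capa_def)
        have H: "(\<exists>i'. (i',j') \<in> M \<and> (\<exists>jb \<in> unsold st - snd ` M. aug_path S Ip (unsold st) M i' jb))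
                 \<or> j' \<in> unsold st - snd ` M"
          using 2 proc2.hyps(8,9,10) by blast
        obtain j0 where j0: "(i,j0) \<in> M" "\<exists>jb \<in> unsold st - snd ` M. aug_path S Ip (unsold st) M i jb"
          using gets[OF mxM finA finJ iIp cpos] a H by blast
        then have "(i,j0) \<in> M1" using proc2.hyps(8,9,10) iIp by blast
        then have "(i,j0,q) \<in> sales st'" using sst'(1) by blast
        then show ?thesis using 2 by blast
      qed
    qed
  qed
qed


lemma run_inv:
  assumes "(alg_step I S v)\<^sup>*\<^sup>* (init_state J0 b) st" "finite I" "finite J0" "S i \<subseteq> J0"
    "v i \<le> b i" "i \<in> I"
  shows "inv6 S v b J0 i st"
  using assms(1)
proof (induction rule: rtranclp_induct)
  case base
  then show ?case by (simp add: inv6_def init_state_def)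
next
  case (step y z)
  then show ?case using step_inv[OF step(2) step(3) assms(2-6)] by simp
qed

theorem lemma6:
  fixes I :: "'b set" and J0 :: "'j set" and S :: "'b \<Rightarrow> 'j set"
    and v b :: "'b \<Rightarrow> real" and st :: "('b, 'j) astate"
    and i :: 'b and pbar :: xreal
  assumes "finite I" and "finite J0"
    and "\<forall>i \<in> I. S i \<subseteq> J0"
    and "\<forall>i \<in> I. v i > 0" and "\<forall>i \<in> I. b i \<ge> 0"
    and "\<forall>i \<in> I. b i \<ge> v i"
    and "final_run I J0 S v b st"
    and "i \<in> I"
    and "\<exists>j q. (i, j, q) \<in> sales st"
    and "\<forall>j q. (i, j, q) \<in> sales st \<longrightarrow> q = pbar"
  shows "\<forall>i' j' q'. (i', j', q') \<in> sales st \<and> q' < pbar \<longrightarrow> j' \<notin> S i"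
proof (intro allI impI notI)
  fix i' j' q'
  assume a: "(i', j', q') \<in> sales st \<and> q' < pbar" and j': "j' \<in> S i"
  have iv: "inv6 S v b J0 i st"
    using run_inv[of I S v J0 b st i] assms by (simp add: final_run_def)
  obtain j q where jq: "(i, j, q) \<in> sales st" using assms(9) by blast
  then have "q = pbar" using assms(10) by blast
  then have "pbar \<le> (v i, 0)" using iv jq unfolding inv6_def by blast
  then have "q' < (v i, 0)" using a by (meson less_le_trans)
  then obtain j2 q2 where "(i, j2, q2) \<in> sales st" "q2 \<le> q'" using iv a j' unfolding inv6_def by blast
  then have "pbar \<le> q'" using assms(10) by blast
  then show False using a by (meson leD)
qed

end
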